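(* Let $k$ be a positive integer and let $p(k)$ be the smallest prime strictly larger than $k$. Suppose $p(k)=k+3$ and $p(k)\equiv 11 \pmod{12}$. Then $\omega(\mathcal F_{\leqslant k})=\chi(\mathcal F_{\leqslant k})=1+p(k)$.
   Context: The vertex set $V$ consists of all reduced fractions $p/q$ with $p,q\in\mathbb Z$, $\gcd(p,q)=1$, together with $1/0$; here $p/q$ and $(-p)/(-q)$ denote the same vertex. For vertices define $d(p/q,a/b)=|pb-qa|$ (which is $\ge1$ for distinct vertices). The graph $\mathcal F_{\leqslant k}$ has vertex set $V$, with an edge between distinct vertices $p/q$ and $a/b$ exactly when $d(p/q,a/b)\le k$. $\omega$ and $\chi$ denote clique number and chromatic number. *)

theory Defs
  imports Main "HOL-Computational_Algebra.Primes" "HOL-Library.Extended_Nat"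
begin

text \<open>Vertices: reduced fractions p/q, represented canonically by the pair (p,q) with
gcd p q = 1 and either q > 0, or q = 0 and p = 1 (the vertex 1/0). This picks exactly
one representative of each class {p/q, (-p)/(-q)}.\<close>

definition farey_vertices :: "(int \<times> int) set" where
  "farey_vertices = {(p, q). coprime p q \<and> (q > 0 \<or> (q = 0 \<and> p = 1))}"

definition fdist :: "int \<times> int \<Rightarrow> int \<times> int \<Rightarrow> int" where
  "fdist x y = \<bar>fst x * snd y - snd x * fst y\<bar>"

definition F_adj :: "nat \<Rightarrow> int \<times> int \<Rightarrow> int \<times> int \<Rightarrow> bool" where
  "F_adj k x y \<longleftrightarrow> x \<in> farey_vertices \<and> y \<in> farey_vertices \<and> x \<noteq> y \<and> fdist x y \<le> int k"

definition F_clique :: "nat \<Rightarrow> (int \<times> int) set \<Rightarrow> bool" where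
  "F_clique k S \<longleftrightarrow> S \<subseteq> farey_vertices \<and> (\<forall>x\<in>S. \<forall>y\<in>S. x \<noteq> y \<longrightarrow> F_adj k x y)"

text \<open>Clique number (in enat, so that an unbounded clique size gives infinity).\<close>
definition F_clique_number :: "nat \<Rightarrow> enat" where
  "F_clique_number k = Sup {enat (card S) | S. finite S \<and> F_clique k S}"

definition F_colourable :: "nat \<Rightarrow> nat \<Rightarrow> bool" where
  "F_colourable k n \<longleftrightarrow> (\<exists>c :: int \<times> int \<Rightarrow> nat.
      (\<forall>x\<in>farey_vertices. c x < n) \<and>
      (\<forall>x y. F_adj k x y \<longrightarrow> c x \<noteq> c y))"

text \<open>Chromatic number (infinity if no finite colouring exists).\<close>
definition F_chromatic_number :: "nat \<Rightarrow> enat" where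
  "F_chromatic_number k = Inf {enat n | n. F_colourable k n}"

definition next_prime :: "nat \<Rightarrow> nat" where
  "next_prime k = (LEAST p. prime p \<and> k < p)"

end

theory Submission
  imports Defs "HOL-Number_Theory.Cong"
begin

definition clq :: "int \<Rightarrow> (int \<times> int) set" where
 "clq M = {(1,0)} \<union> (\<lambda>n. (n,1)) ` {0..7*M+5} \<union> (\<lambda>j. (2*j+1,2)) ` {2*M+1..5*M+3}
   \<union> (\<lambda>j. (3*j+1,3)) ` {3*M+2..4*M+2} \<union> (\<lambda>j. (3*j+2,3)) ` {3*M+2..4*M+2}"

lemma cop2: "coprime (2*j+1) (2::int)"
  by simp

lemma cop3: "coprime (3*j+1) (3::int)" "coprime (3*j+2) (3::int)"
proof -
  show "coprime (3*j+1) (3::int)"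
    by (metis coprime_mult_right_iff coprime_add_one_left)
  have "gcd 3 (j*3+2) = gcd 3 (2::int)" by (rule gcd_add_mult)
  then have "gcd (3*j+2) (3::int) = 1" by (simp add: gcd.commute mult.commute)
  then show "coprime (3*j+2) (3::int)" by (simp add: coprime_iff_gcd_eq_1)
qed

lemma clq_sub: "clq M \<subseteq> farey_vertices"
  unfolding clq_def farey_vertices_def using cop2 cop3 by auto

lemma clq_dist: "M \<ge> 0 \<Longrightarrow> int k = 12*M+8 \<Longrightarrow> x \<in> clq M \<Longrightarrow> y \<in> clq M \<Longrightarrow> fdist x y \<le> int k"
  unfolding clq_def fdist_def
  by (auto simp: abs_if)

lemma clq_clique: "M \<ge> 0 \<Longrightarrow> int k = 12*M+8 \<Longrightarrow> F_clique k (clq M)"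
  unfolding F_clique_def F_adj_def using clq_sub clq_dist by blast

lemma clq_finite: "finite (clq M)"
  unfolding clq_def by auto

lemma clq_card: assumes "M \<ge> 0" shows "card (clq M) = nat (12*M+12)"
proof -
  let ?A = "{(1::int,0::int)}"
  let ?B = "(\<lambda>n. (n,1::int)) ` {0..7*M+5}"
  let ?C = "(\<lambda>j. (2*j+1,2::int)) ` {2*M+1..5*M+3}"
  let ?D = "(\<lambda>j. (3*j+1,3::int)) ` {3*M+2..4*M+2}"
  let ?E = "(\<lambda>j. (3*j+2,3::int)) ` {3*M+2..4*M+2}"
  have cB: "card ?B = nat (7*M+6)" by (subst card_image) (auto simp: inj_on_def)
  have cC: "card ?C = nat (3*M+3)" by (subst card_image) (auto simp: inj_on_def)
  have cD: "card ?D = nat (M+1)" by (subst card_image) (auto simp: inj_on_def)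
  have cE: "card ?E = nat (M+1)" by (subst card_image) (auto simp: inj_on_def)
  have DE: "?D \<inter> ?E = {}" by auto presburger
  have "card (?D \<union> ?E) = nat (2*M+2)"
    using card_Un_disjoint[OF _ _ DE] cD cE assms by simp
  moreover have "card (?C \<union> (?D \<union> ?E)) = card ?C + card (?D \<union> ?E)"
    by (rule card_Un_disjoint) auto
  moreover have "card (?B \<union> (?C \<union> (?D \<union> ?E))) = card ?B + card (?C \<union> (?D \<union> ?E))"
    by (rule card_Un_disjoint) auto
  moreover have "card (?A \<union> (?B \<union> (?C \<union> (?D \<union> ?E)))) = card ?A + card (?B \<union> (?C \<union> (?D \<union> ?E)))"
    by (rule card_Un_disjoint) auto
  moreover have "clq M = ?A \<union> (?B \<union> (?C \<union> (?D \<union> ?E)))"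
    unfolding clq_def by (simp add: Un_assoc)
  ultimately have "card (clq M) = Suc (nat (7*M+6) + (nat (3*M+3) + nat (2*M+2)))"
    using cB cC assms by simp
  then show ?thesis using assms by (simp add: nat_eq_iff)
qed

lemma det_nz:
  assumes "x \<in> farey_vertices" "y \<in> farey_vertices" "x \<noteq> y"
  shows "fst x * snd y - snd x * fst y \<noteq> 0"
proof
  obtain a b where x: "x = (a,b)" by force
  obtain c d where y: "y = (c,d)" by force
  assume "fst x * snd y - snd x * fst y = 0"
  then have e: "a*d = b*c" using x y by simp
  have cx: "coprime a b" "b > 0 \<or> (b = 0 \<and> a = 1)" using assms(1) x by (auto simp: farey_vertices_def)
  have cy: "coprime c d" "d > 0 \<or> (d = 0 \<and> c = 1)" using assms(2) y by (auto simp: farey_vertices_def)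
  show False
  proof (cases "b = 0")
    case True
    then have "a = 1" using cx by auto
    then have "d = 0" using e True by simp
    then have "c = 1" using cy by auto
    then show False using assms(3) x y True \<open>a = 1\<close> \<open>d = 0\<close> by simp
  next
    case False
    then have b0: "b > 0" using cx by auto
    show False
    proof (cases "d = 0")
      case True
      then have "c = 1" using cy by auto
      then show False using e True False by simp
    next
      case False
      then have d0: "d > 0" using cy by auto
      have "b dvd a*d" using e by simp
      then have "b dvd d" using cx(1)
        by (metis coprime_commute coprime_dvd_mult_right_iff)
      moreover have "d dvd c*b" using e by (metis dvd_triv_right mult.commute)
      then have "d dvd b" using cy(1)
        by (metis coprime_commute coprime_dvd_mult_right_iff)
      ultimately have "b = d" using b0 d0 by (simp add: zdvd_antisym_nonneg)
      then have "a = c" using e b0 by (simp add: mult.commute)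
      then show False using \<open>b = d\<close> assms(3) x y by simp
    qed
  qed
qed

definition minv :: "int \<Rightarrow> int \<Rightarrow> int" where
  "minv P b = (SOME u. [b*u = 1] (mod P))"

definition col :: "int \<Rightarrow> int \<times> int \<Rightarrow> nat" where
  "col P x = (if P dvd snd x then nat P else nat ((fst x * minv P (snd x)) mod P))"

lemma minv: assumes "prime P" "\<not> P dvd b" shows "P dvd b * minv P b - 1"
proof -
  have "\<exists>u. [b*u = 1] (mod P)"
    using assms cong_solve_coprime_int coprime_commute prime_imp_coprime_int by blast
  then have "[b * minv P b = 1] (mod P)" unfolding minv_def by (rule someI_ex)
  then show ?thesis by (simp add: cong_iff_dvd_diff)
qed

lemma col_lt: assumes "prime P" shows "col P x < nat P + 1"
proof -
  have "P > 0" using assms prime_gt_0_int by blast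
  have lt: "nat (t mod P) < nat P" for t using \<open>P > 0\<close> pos_mod_bound[of P t] by (auto simp: nat_less_eq_zless)
  have lt2: "nat (t mod P) < Suc (nat P)" for t using lt[of t] by (simp only: less_SucI)
  show ?thesis unfolding col_def using lt2 by simp
qed

lemma col_dvd:
  assumes "prime P" and eq: "col P (a,b) = col P (c,d)"
  shows "P dvd a*d - b*c"
proof -
  have P0: "P > 0" using assms prime_gt_0_int by blast
  have lt: "nat (t mod P) < nat P" for t using P0 pos_mod_bound[of P t] by (auto simp: nat_less_eq_zless)
  consider "P dvd b" "P dvd d" | "\<not> P dvd b" "\<not> P dvd d"
    using eq lt unfolding col_def by (metis fst_conv snd_conv less_irrefl)
  then show ?thesis
  proof cases
    case 1
    then show ?thesis by (simp add: dvd_diff)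
  next
    case 2
    define u where "u = minv P b"
    define v where "v = minv P d"
    have hu: "P dvd b*u - 1" using minv[OF assms(1) 2(1)] u_def by simp
    have hv: "P dvd d*v - 1" using minv[OF assms(1) 2(2)] v_def by simp
    have "nat ((a*u) mod P) = nat ((c*v) mod P)" using eq 2 unfolding col_def u_def v_def by simp
    then have "(a*u) mod P = (c*v) mod P" using P0 by (simp add: nat_eq_iff2)
    then have h: "P dvd a*u - c*v" by (simp add: mod_eq_dvd_iff)
    have id: "a*d - b*c = (a*u - c*v)*b*d - a*d*(b*u - 1) + c*b*(d*v - 1)"
      by (simp add: algebra_simps)
    show ?thesis unfolding id
      by (rule dvd_add[OF dvd_diff[OF dvd_mult2[OF dvd_mult2[OF h]] dvd_mult[OF hu]] dvd_mult[OF hv]])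
  qed
qed

lemma col_adj:
  assumes "prime P" "int k < P" "F_adj k x y"
  shows "col P x \<noteq> col P y"
proof
  assume eq: "col P x = col P y"
  obtain a b where x: "x = (a,b)" by force
  obtain c d where y: "y = (c,d)" by force
  have dv: "P dvd a*d - b*c" using col_dvd[OF assms(1)] eq x y by simp
  have nz: "a*d - b*c \<noteq> 0" using det_nz assms(3) x y unfolding F_adj_def by fastforce
  have "\<bar>P\<bar> \<le> \<bar>a*d - b*c\<bar>" using dvd_imp_le_int[OF nz dv] .
  moreover have "\<bar>a*d - b*c\<bar> \<le> int k" using assms(3) x y unfolding F_adj_def fdist_def by simp
  ultimately show False using assms(2) by simp
qed

lemma clique_card_le:
  assumes "finite T" "F_clique k T" "\<forall>x\<in>farey_vertices. c x < n" "\<forall>x y. F_adj k x y \<longrightarrow> c x \<noteq> c y"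
  shows "card T \<le> n"
proof -
  have "inj_on c T" using assms(2,4) unfolding F_clique_def inj_on_def by blast
  moreover have "c ` T \<subseteq> {..<n}" using assms(2,3) unfolding F_clique_def by auto
  ultimately show ?thesis by (metis card_image card_lessThan card_mono finite_lessThan)
qed

theorem theorem1p3:
  fixes k :: nat
  assumes "0 < k"
    and "next_prime k = k + 3"
    and "next_prime k mod 12 = 11"
  shows "F_clique_number k = enat (1 + next_prime k)
       \<and> F_chromatic_number k = enat (1 + next_prime k)"
proof -
  define p where "p = next_prime k"
  have "prime p \<and> k < p" unfolding p_def next_prime_def
    by (rule LeastI_ex) (use bigger_prime in blast)
  then have pp: "prime (int p)" by simp
  have pk: "int k < int p" using assms(2) p_def by simp
  define M where "M = int (k div 12)"
  have M0: "M \<ge> 0" unfolding M_def by simp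
  have "k = 12*(k div 12)+8" using assms(3)[unfolded assms(2)] by presburger
  then have kM: "int k = 12*M+8" unfolding M_def by linarith
  have cl: "F_clique k (clq M)" using clq_clique[OF M0 kM] .
  have cc: "card (clq M) = p + 1" using clq_card[OF M0] kM assms(2) p_def by simp
  have colP: "F_colourable k (p+1)" unfolding F_colourable_def
  proof (intro exI[of _ "col (int p)"] conjI ballI allI impI)
    fix x show "col (int p) x < p + 1" using col_lt[OF pp] by simp
  next
    fix x y assume "F_adj k x y" then show "col (int p) x \<noteq> col (int p) y"
      using col_adj[OF pp pk] by blast
  qed
  have bound: "card T \<le> n" if "finite T" "F_clique k T" "F_colourable k n" for T n
    using that clique_card_le unfolding F_colourable_def by metis
  have "F_clique_number k = enat (p+1)" unfolding F_clique_number_def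
  proof (rule antisym)
    show "Sup {enat (card S) |S. finite S \<and> F_clique k S} \<le> enat (p + 1)"
      using bound[OF _ _ colP] by (auto intro!: Sup_least)
    show "enat (p + 1) \<le> Sup {enat (card S) |S. finite S \<and> F_clique k S}"
    proof (rule Sup_upper)
      show "enat (p + 1) \<in> {enat (card S) |S. finite S \<and> F_clique k S}"
        using cl cc clq_finite[of M] by (auto intro!: exI[of _ "clq M"])
    qed
  qed
  moreover have "F_chromatic_number k = enat (p+1)" unfolding F_chromatic_number_def
  proof (rule antisym)
    show "Inf {enat n |n. F_colourable k n} \<le> enat (p + 1)"
      using colP by (auto intro!: Inf_lower)
    show "enat (p + 1) \<le> Inf {enat n |n. F_colourable k n}"
      using bound[OF clq_finite cl] cc by (auto intro!: Inf_greatest)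
  qed
  ultimately show ?thesis unfolding p_def by simp
qed

end
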